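(* Let $\mathbf{G}$ be the graph with vertex set consisting of $\mathbb{Z}_+=\{0,1,2,\dots\}$ together with additional vertices such that, for each $n\ge0$, $n$ and $n+1$ are joined by $2^n$ disjoint paths of length $2$ (each through its own new middle vertex), and there are no other edges. Then $\mathbf{G}$ is transient, but two independent simple random walks on $\mathbf{G}$ started from the same vertex meet infinitely many times almost surely. *)

theory Defs
  imports "HOL-Probability.Probability"
begin

text \<open>Vertices: Z n is the integer vertex n of Z_+; Mid n k (for k < 2^n) is the
  middle vertex of the k-th path of length 2 joining n and n+1.  Values Mid n k with
  k \<ge> 2^n are not vertices of G (they are isolated junk elements of the type).\<close>

datatype vtx = Z nat | Mid nat nat

definition G_verts :: "vtx set" where
  "G_verts = range Z \<union> {Mid n k | n k. k < 2 ^ n}"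

definition G_edge :: "vtx \<Rightarrow> vtx \<Rightarrow> bool" where
  "G_edge x y \<longleftrightarrow>
     (\<exists>n k. k < 2 ^ n \<and>
        ((x = Z n \<and> y = Mid n k) \<or> (x = Mid n k \<and> y = Z n) \<or>
         (x = Mid n k \<and> y = Z (Suc n)) \<or> (x = Z (Suc n) \<and> y = Mid n k)))"

definition srw :: "'s measure \<Rightarrow> ('a \<Rightarrow> 'a \<Rightarrow> bool) \<Rightarrow> (nat \<Rightarrow> 's \<Rightarrow> 'a) \<Rightarrow> 'a \<Rightarrow> bool" where
  "srw M E X v \<longleftrightarrow>
     prob_space M \<and>
     (\<forall>n. X n \<in> measurable M (count_space UNIV)) \<and>
     (AE \<omega> in M. X 0 \<omega> = v) \<and>
     (\<forall>n (xs :: nat \<Rightarrow> 'a) y.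
        measure M {\<omega> \<in> space M. (\<forall>i\<le>n. X i \<omega> = xs i) \<and> X (Suc n) \<omega> = y}
        = measure M {\<omega> \<in> space M. \<forall>i\<le>n. X i \<omega> = xs i}
          * (if E (xs n) y then 1 / real (card {z. E (xs n) z}) else 0))"

definition indep_processes :: "'s measure \<Rightarrow> (nat \<Rightarrow> 's \<Rightarrow> 'a) \<Rightarrow> (nat \<Rightarrow> 's \<Rightarrow> 'a) \<Rightarrow> bool" where
  "indep_processes M X Y \<longleftrightarrow>
     prob_space.indep_var M
       (Pi\<^sub>M UNIV (\<lambda>_. count_space UNIV)) (\<lambda>\<omega> n. X n \<omega>)
       (Pi\<^sub>M UNIV (\<lambda>_. count_space UNIV)) (\<lambda>\<omega> n. Y n \<omega>)"

end

theory Submission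
  imports Defs
begin


definition Nb :: "vtx \<Rightarrow> vtx set" where "Nb x = {z. G_edge x z}"
definition P :: "vtx \<Rightarrow> vtx \<Rightarrow> real" where
  "P x y = (if G_edge x y then 1 / real (card (Nb x)) else 0)"

fun lv :: "vtx \<Rightarrow> int" where
  "lv (Z n) = 2 * int n"
| "lv (Mid n k) = 2 * int n + 1"

fun isZ :: "vtx \<Rightarrow> bool" where
  "isZ (Z n) = True" | "isZ (Mid n k) = False"

fun LK :: "vtx \<Rightarrow> (int \<Rightarrow> real) \<Rightarrow> real" where
  "LK (Z n) F = (if n = 0 then F 1 else 2/3 * F (2 * int n + 1) + 1/3 * F (2 * int n - 1))"
| "LK (Mid n k) F = 1/2 * F (2 * int n) + 1/2 * F (2 * int n + 2)"

lemma valid_Z[simp]: "Z n \<in> G_verts" by (auto simp: G_verts_def)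
lemma valid_Mid[simp]: "Mid n k \<in> G_verts \<longleftrightarrow> k < 2 ^ n" by (auto simp: G_verts_def)

lemma Nb_Z0: "Nb (Z 0) = {Mid 0 0}"
  by (auto simp: Nb_def G_edge_def)
lemma Nb_ZS: "Nb (Z (Suc n)) = Mid (Suc n) ` {..<2 ^ Suc n} \<union> Mid n ` {..<2 ^ n}"
  apply (auto simp: Nb_def G_edge_def)
  apply (rule_tac x="Suc n" in exI)
  apply auto
  done
lemma Nb_Mid: "k < 2 ^ n \<Longrightarrow> Nb (Mid n k) = {Z n, Z (Suc n)}"
  by (auto simp: Nb_def G_edge_def)
lemma Nb_junk: "\<not> k < 2 ^ n \<Longrightarrow> Nb (Mid n k) = {}"
  by (auto simp: Nb_def G_edge_def)

lemma Nb_empty: "x \<notin> G_verts \<Longrightarrow> Nb x = {}"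
  by (cases x) (auto simp: Nb_junk)

lemma finite_Nb: "finite (Nb x)"
proof (cases x)
  case (Z n) then show ?thesis by (cases n) (auto simp: Nb_Z0 Nb_ZS)
next
  case (Mid n k) then show ?thesis by (cases "k < 2^n") (auto simp: Nb_Mid Nb_junk)
qed

lemma Nb_props:
  assumes "y \<in> Nb x"
  shows "x \<in> G_verts" "y \<in> G_verts" "isZ y \<longleftrightarrow> \<not> isZ x" "\<bar>lv y - lv x\<bar> = 1"
  using assms by (auto simp: Nb_def G_edge_def)

lemma card_Nb_ZS: "card (Nb (Z (Suc n))) = 3 * 2 ^ n"
proof -
  have "card (Nb (Z (Suc n))) = card (Mid (Suc n) ` {..<2 ^ Suc n}) + card (Mid n ` {..<2 ^ n})"
    unfolding Nb_ZS by (rule card_Un_disjoint) auto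
  also have "\<dots> = 2 ^ Suc n + 2 ^ n"
    by (simp add: card_image inj_on_def)
  finally show ?thesis by simp
qed

lemma P_nonneg: "P x y \<ge> 0" by (simp add: P_def)

lemma sumN:
  assumes "x \<in> G_verts"
  shows "(\<Sum>y\<in>Nb x. P x y * F (lv y)) = LK x F"
proof (cases x)
  case (Z n)
  show ?thesis
  proof (cases n)
    case 0
    then show ?thesis using Z by (simp add: Nb_Z0 P_def Nb_def[symmetric] G_edge_def)
  next
    case (Suc m)
    have PP: "y \<in> Nb x \<Longrightarrow> P x y = 1 / (3 * 2 ^ m)" for y
      using Z Suc card_Nb_ZS[of m] by (simp add: P_def Nb_def)
    have "(\<Sum>y\<in>Nb x. P x y * F (lv y)) = (\<Sum>y\<in>Nb x. 1 / (3 * 2 ^ m) * F (lv y))"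
      by (rule sum.cong) (auto simp: PP)
    also have "\<dots> = 1 / (3 * 2 ^ m) * ((\<Sum>y\<in>Mid (Suc m) ` {..<2 ^ Suc m}. F (lv y)) + (\<Sum>y\<in>Mid m ` {..<2 ^ m}. F (lv y)))"
      unfolding Z Suc Nb_ZS sum_distrib_left[symmetric]
      by (subst sum.union_disjoint) auto
    also have "\<dots> = 1 / (3 * 2 ^ m) * (2 ^ Suc m * F (2 * int m + 3) + 2 ^ m * F (2 * int m + 1))"
      by (simp add: sum.reindex inj_on_def algebra_simps)
    also have "\<dots> = LK x F"
      using Z Suc by (simp add: field_simps)
    finally show ?thesis .
  qed
next
  case (Mid n k)
  with assms have k: "k < 2 ^ n" by simp
  have c: "card (Nb x) = 2" using Mid k by (simp add: Nb_Mid)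
  have e: "G_edge (Mid n k) (Z n)" "G_edge (Mid n k) (Z (Suc n))" using k by (auto simp: G_edge_def)
  show ?thesis using Mid k c e by (simp add: Nb_Mid P_def Nb_def[symmetric] field_simps)
qed



definition cyl :: "'s measure \<Rightarrow> (nat \<Rightarrow> 's \<Rightarrow> 'a) \<Rightarrow> nat \<Rightarrow> (nat \<Rightarrow> 'a) \<Rightarrow> 's set" where
  "cyl M W n zs = {\<omega> \<in> space M. \<forall>i\<le>n. W i \<omega> = zs i}"

definition stay :: "'s measure \<Rightarrow> (nat \<Rightarrow> 's \<Rightarrow> 'a) \<Rightarrow> (nat \<Rightarrow> 'a set) \<Rightarrow> nat \<Rightarrow> nat \<Rightarrow> 's set" where
  "stay M W S m N = {\<omega> \<in> space M. \<forall>j. m < j \<and> j \<le> m + N \<longrightarrow> W j \<omega> \<in> S j}"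

fun Rk :: "('a \<Rightarrow> 'a \<Rightarrow> real) \<Rightarrow> ('a \<Rightarrow> 'a set) \<Rightarrow> (nat \<Rightarrow> 'a set) \<Rightarrow> nat \<Rightarrow> nat \<Rightarrow> 'a \<Rightarrow> real" where
  "Rk p F S m 0 s = 1"
| "Rk p F S m (Suc N) s = (\<Sum>t\<in>F s \<inter> S (Suc m). p s t * Rk p F S (Suc m) N t)"

lemma Zset:
  assumes "W n \<in> measurable M (count_space UNIV)"
  shows "{\<omega>\<in>space M. Q (W n \<omega>)} \<in> sets M"
proof -
  have "W n -` {x. Q x} \<inter> space M \<in> sets M" by (rule measurable_sets[OF assms]) simp
  moreover have "W n -` {x. Q x} \<inter> space M = {\<omega>\<in>space M. Q (W n \<omega>)}" by auto
  ultimately show ?thesis by simp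
qed

lemma cyl_sets:
  assumes "\<And>n. W n \<in> measurable M (count_space UNIV)"
  shows "cyl M W n zs \<in> sets M"
proof -
  have "{\<omega> \<in> space M. \<forall>i\<in>{..n}. W i \<omega> = zs i} \<in> sets M"
    by (rule sets.sets_Collect_finite_All) (auto intro: Zset assms)
  moreover have "cyl M W n zs = {\<omega> \<in> space M. \<forall>i\<in>{..n}. W i \<omega> = zs i}" unfolding cyl_def by auto
  ultimately show ?thesis by simp
qed

lemma stay_sets:
  assumes "\<And>n. W n \<in> measurable M (count_space UNIV)"
  shows "stay M W S m N \<in> sets M"
proof -
  have "{\<omega> \<in> space M. \<forall>j\<in>{m<..m+N}. W j \<omega> \<in> S j} \<in> sets M"
    by (rule sets.sets_Collect_finite_All) (auto intro: Zset assms)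
  moreover have "{\<omega> \<in> space M. \<forall>j\<in>{m<..m+N}. W j \<omega> \<in> S j} = stay M W S m N"
    unfolding stay_def by auto
  ultimately show ?thesis by simp
qed

lemma cyl_Suc:
  "cyl M W (Suc m) (zs(Suc m := t)) = cyl M W m zs \<inter> {\<omega>. W (Suc m) \<omega> = t}"
  unfolding cyl_def by (auto simp: le_Suc_eq)

lemma stay_Suc:
  "stay M W S m (Suc N) = {\<omega> \<in> space M. W (Suc m) \<omega> \<in> S (Suc m)} \<inter> stay M W S (Suc m) N"
proof (intro set_eqI iffI)
  fix \<omega> assume a: "\<omega> \<in> stay M W S m (Suc N)"
  then have sp: "\<omega> \<in> space M" and h: "\<And>j. m < j \<Longrightarrow> j \<le> m + Suc N \<Longrightarrow> W j \<omega> \<in> S j"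
    unfolding stay_def by blast+
  have "W (Suc m) \<omega> \<in> S (Suc m)" by (rule h) auto
  moreover have "\<omega> \<in> stay M W S (Suc m) N" unfolding stay_def using sp h by auto
  ultimately show "\<omega> \<in> {\<omega> \<in> space M. W (Suc m) \<omega> \<in> S (Suc m)} \<inter> stay M W S (Suc m) N" using sp by blast
next
  fix \<omega> assume "\<omega> \<in> {\<omega> \<in> space M. W (Suc m) \<omega> \<in> S (Suc m)} \<inter> stay M W S (Suc m) N"
  then have sp: "\<omega> \<in> space M" and h0: "W (Suc m) \<omega> \<in> S (Suc m)"
    and h: "\<And>j. Suc m < j \<Longrightarrow> j \<le> Suc m + N \<Longrightarrow> W j \<omega> \<in> S j"
    unfolding stay_def by blast+
  have "W j \<omega> \<in> S j" if "m < j" "j \<le> m + Suc N" for j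
  proof (cases "j = Suc m")
    case True then show ?thesis using h0 by simp
  next
    case False then show ?thesis using that h by simp
  qed
  then show "\<omega> \<in> stay M W S m (Suc N)" unfolding stay_def using sp by blast
qed

lemma markov_stay:
  assumes M: "prob_space M"
    and Zm: "\<And>n. W n \<in> measurable M (count_space UNIV)"
    and Ff: "\<And>s. finite (F s)"
    and Mk: "\<And>n zs t. measure M (cyl M W n zs \<inter> {\<omega>. W (Suc n) \<omega> = t}) = measure M (cyl M W n zs) * p (zs n) t"
    and Nl: "\<And>n zs. measure M (cyl M W n zs \<inter> {\<omega>. W (Suc n) \<omega> \<notin> F (zs n)}) = 0"
  shows "measure M (cyl M W m zs \<inter> stay M W S m N) = measure M (cyl M W m zs) * Rk p F S m N (zs m)"
proof (induction N arbitrary: m zs)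
  case 0
  have "stay M W S m 0 = space M" unfolding stay_def by auto
  moreover have "cyl M W m zs \<subseteq> space M" unfolding cyl_def by auto
  ultimately show ?case by (simp add: Int_absorb2)
next
  case (Suc N)
  interpret prob_space M by fact
  define C where "C = cyl M W m zs"
  define s where "s = zs m"
  define T where "T = F s \<inter> S (Suc m)"
  define A where "A = (\<lambda>t. cyl M W (Suc m) (zs(Suc m := t)) \<inter> stay M W S (Suc m) N)"
  have Cs: "C \<in> sets M" unfolding C_def by (rule cyl_sets[OF Zm])
  have As: "A t \<in> sets M" for t unfolding A_def by (intro sets.Int cyl_sets stay_sets Zm)
  have Ss: "stay M W S m (Suc N) \<in> sets M" by (rule stay_sets[OF Zm])
  have Bs: "{\<omega>\<in>space M. W (Suc m) \<omega> \<notin> F s} \<in> sets M" by (rule Zset[OF Zm])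
  have At: "A t = C \<inter> {\<omega>. W (Suc m) \<omega> = t} \<inter> stay M W S (Suc m) N" for t
    unfolding A_def cyl_Suc C_def by simp
  have Csp: "C \<subseteq> space M" unfolding C_def cyl_def by blast
  have split: "C \<inter> stay M W S m (Suc N) = (\<Union>t\<in>T. A t) \<union> (C \<inter> stay M W S m (Suc N) \<inter> {\<omega>\<in>space M. W (Suc m) \<omega> \<notin> F s})"
  proof (intro equalityI subsetI)
    fix \<omega> assume a: "\<omega> \<in> C \<inter> stay M W S m (Suc N)"
    then have c: "\<omega> \<in> C" and s1: "W (Suc m) \<omega> \<in> S (Suc m)" and s2: "\<omega> \<in> stay M W S (Suc m) N"
      unfolding stay_Suc by blast+
    show "\<omega> \<in> (\<Union>t\<in>T. A t) \<union> (C \<inter> stay M W S m (Suc N) \<inter> {\<omega>\<in>space M. W (Suc m) \<omega> \<notin> F s})"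
    proof (cases "W (Suc m) \<omega> \<in> F s")
      case True
      then have "W (Suc m) \<omega> \<in> T" using s1 unfolding T_def by blast
      moreover have "\<omega> \<in> A (W (Suc m) \<omega>)" unfolding At using c s2 by blast
      ultimately show ?thesis by blast
    next
      case False then show ?thesis using a Csp by blast
    qed
  next
    fix \<omega> assume "\<omega> \<in> (\<Union>t\<in>T. A t) \<union> (C \<inter> stay M W S m (Suc N) \<inter> {\<omega>\<in>space M. W (Suc m) \<omega> \<notin> F s})"
    then show "\<omega> \<in> C \<inter> stay M W S m (Suc N)"
    proof
      assume "\<omega> \<in> (\<Union>t\<in>T. A t)"
      then obtain t where t: "t \<in> T" "\<omega> \<in> A t" by blast
      then have "\<omega> \<in> C" "W (Suc m) \<omega> = t" "\<omega> \<in> stay M W S (Suc m) N" unfolding At by blast+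
      moreover have "t \<in> S (Suc m)" using t unfolding T_def by blast
      ultimately show ?thesis unfolding stay_Suc using Csp by blast
    qed blast
  qed
  have null: "measure M (C \<inter> stay M W S m (Suc N) \<inter> {\<omega>\<in>space M. W (Suc m) \<omega> \<notin> F s}) = 0"
  proof -
    have "measure M (C \<inter> stay M W S m (Suc N) \<inter> {\<omega>\<in>space M. W (Suc m) \<omega> \<notin> F s})
        \<le> measure M (C \<inter> {\<omega>. W (Suc m) \<omega> \<notin> F s})"
    proof (rule finite_measure_mono)
      have "C \<inter> {\<omega>. W (Suc m) \<omega> \<notin> F s} = C \<inter> {\<omega>\<in>space M. W (Suc m) \<omega> \<notin> F s}"
        using Cs sets.sets_into_space by blast
      then show "C \<inter> {\<omega>. W (Suc m) \<omega> \<notin> F s} \<in> events" using Cs Bs by auto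
    qed auto
    also have "\<dots> = 0" using Nl[of m zs] unfolding C_def s_def .
    finally show ?thesis using measure_nonneg[of M] by (simp add: antisym)
  qed
  have disj: "(\<Union>t\<in>T. A t) \<inter> (C \<inter> stay M W S m (Suc N) \<inter> {\<omega>\<in>space M. W (Suc m) \<omega> \<notin> F s}) = {}"
    unfolding A_def cyl_Suc T_def by blast
  have fT: "finite T" unfolding T_def using Ff by auto
  have "measure M (C \<inter> stay M W S m (Suc N)) = measure M (\<Union>t\<in>T. A t) + measure M (C \<inter> stay M W S m (Suc N) \<inter> {\<omega>\<in>space M. W (Suc m) \<omega> \<notin> F s})"
    apply (subst split)
    by (rule finite_measure_Union) (use As fT Cs Ss Bs disj in auto)
  also have "\<dots> = measure M (\<Union>t\<in>T. A t) + 0" using null by simp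
  also have "\<dots> = (\<Sum>t\<in>T. measure M (A t))"
  proof -
    have "disjoint_family_on A T" unfolding disjoint_family_on_def At by blast
    then show ?thesis by (simp, intro finite_measure_finite_Union) (use As fT in auto)
  qed
  also have "\<dots> = (\<Sum>t\<in>T. measure M C * p s t * Rk p F S (Suc m) N t)"
  proof (rule sum.cong)
    fix t assume "t \<in> T"
    have "measure M (A t) = measure M (cyl M W (Suc m) (zs(Suc m := t))) * Rk p F S (Suc m) N t"
      unfolding A_def using Suc.IH[of "Suc m" "zs(Suc m := t)"] by (simp only: fun_upd_same)
    also have "measure M (cyl M W (Suc m) (zs(Suc m := t))) = measure M C * p s t"
      unfolding cyl_Suc C_def s_def by (rule Mk)
    finally show "measure M (A t) = measure M C * p s t * Rk p F S (Suc m) N t" .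
  qed simp
  also have "\<dots> = measure M C * Rk p F S m (Suc N) s"
    by (simp add: T_def sum_distrib_left mult.assoc)
  finally show ?case unfolding C_def s_def .
qed

lemma measure_sum_vals:
  assumes M: "prob_space M" and Wm: "W \<in> measurable M (count_space UNIV)"
    and A: "A \<in> sets M" and T: "finite T"
  shows "measure M (A \<inter> {\<omega>. W \<omega> \<in> T}) = (\<Sum>t\<in>T. measure M (A \<inter> {\<omega>. W \<omega> = t}))"
proof -
  interpret prob_space M by fact
  have As: "A \<subseteq> space M" using A sets.sets_into_space by blast
  have s: "A \<inter> {\<omega>. W \<omega> = t} \<in> sets M" for t
  proof -
    have "W -` {t} \<inter> space M \<in> sets M" by (rule measurable_sets[OF Wm]) simp
    then have "A \<inter> (W -` {t} \<inter> space M) \<in> sets M" using A by blast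
    moreover have "A \<inter> (W -` {t} \<inter> space M) = A \<inter> {\<omega>. W \<omega> = t}" using As by blast
    ultimately show ?thesis by simp
  qed
  have "A \<inter> {\<omega>. W \<omega> \<in> T} = (\<Union>t\<in>T. A \<inter> {\<omega>. W \<omega> = t})" by blast
  moreover have "measure M (\<Union>t\<in>T. A \<inter> {\<omega>. W \<omega> = t}) = (\<Sum>t\<in>T. measure M (A \<inter> {\<omega>. W \<omega> = t}))"
    by (rule finite_measure_finite_Union) (use T s in \<open>auto simp: disjoint_family_on_def\<close>)
  ultimately show ?thesis by simp
qed



lemma P_sum1: "x \<in> G_verts \<Longrightarrow> (\<Sum>y\<in>Nb x. P x y) = 1"
  using sumN[of x "\<lambda>_. 1"] by (cases x) auto

lemma P_zero: "\<not> G_edge x y \<Longrightarrow> P x y = 0" by (simp add: P_def)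
lemma P_zero': "y \<notin> Nb x \<Longrightarrow> P x y = 0" by (simp add: P_def Nb_def)

lemma P_sum_le1: "(\<Sum>y\<in>Nb x. P x y) \<le> 1"
  by (cases "x \<in> G_verts") (auto simp: P_sum1 Nb_empty)

locale walk =
  fixes M :: "'s measure" and X :: "nat \<Rightarrow> 's \<Rightarrow> vtx" and v :: vtx
  assumes srw: "srw M G_edge X v" and vv: "v \<in> G_verts"
begin

lemma ps: "prob_space M" using srw unfolding srw_def by blast
lemma Xm: "X n \<in> measurable M (count_space UNIV)" using srw unfolding srw_def by blast

lemma Mk: "measure M (cyl M X n xs \<inter> {\<omega>. X (Suc n) \<omega> = y}) = measure M (cyl M X n xs) * P (xs n) y"
proof -
  have "cyl M X n xs \<inter> {\<omega>. X (Suc n) \<omega> = y} = {\<omega> \<in> space M. (\<forall>i\<le>n. X i \<omega> = xs i) \<and> X (Suc n) \<omega> = y}"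
    unfolding cyl_def by blast
  then show ?thesis using srw unfolding srw_def cyl_def P_def Nb_def by simp
qed

lemma cyl0: "measure M (cyl M X 0 xs) = (if xs 0 = v then 1 else 0)"
proof -
  interpret prob_space M by (rule ps)
  have ae: "AE \<omega> in M. X 0 \<omega> = v" using srw unfolding srw_def by blast
  have s: "{\<omega>\<in>space M. X 0 \<omega> = v} \<in> sets M" by (rule Zset[OF Xm])
  have p1: "prob {\<omega>\<in>space M. X 0 \<omega> = v} = 1"
    using prob_eq_1[OF s] ae by (auto elim: AE_mp)
  have c: "cyl M X 0 xs = {\<omega>\<in>space M. X 0 \<omega> = xs 0}" unfolding cyl_def by auto
  show ?thesis
  proof (cases "xs 0 = v")
    case True then show ?thesis using c p1 by simp
  next
    case False
    have s2: "{\<omega>\<in>space M. X 0 \<omega> \<noteq> v} \<in> sets M" by (rule Zset[OF Xm])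
    have "{\<omega>\<in>space M. X 0 \<omega> \<noteq> v} = space M - {\<omega>\<in>space M. X 0 \<omega> = v}" by blast
    then have "prob {\<omega>\<in>space M. X 0 \<omega> \<noteq> v} = 0" using prob_compl[OF s] p1 by simp
    moreover have "prob (cyl M X 0 xs) \<le> prob {\<omega>\<in>space M. X 0 \<omega> \<noteq> v}"
      by (rule finite_measure_mono) (use c False s2 in auto)
    ultimately show ?thesis using False measure_nonneg[of M "cyl M X 0 xs"] by simp
  qed
qed

lemma cyl_junk: "xs n \<notin> G_verts \<Longrightarrow> measure M (cyl M X n xs) = 0"
proof (induction n arbitrary: xs)
  case 0
  then have "xs 0 \<noteq> v" using vv by auto
  then show ?case using cyl0 by simp
next
  case (Suc n)
  have "xs(Suc n := xs (Suc n)) = xs" by simp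
  then have "cyl M X (Suc n) xs = cyl M X n xs \<inter> {\<omega>. X (Suc n) \<omega> = xs (Suc n)}"
    using cyl_Suc[of M X n xs "xs (Suc n)"] by simp
  moreover have "P (xs n) (xs (Suc n)) = 0"
    using Suc.prems Nb_props(2) P_zero' by blast
  ultimately show ?case using Mk by simp
qed

lemma Nl: "measure M (cyl M X n xs \<inter> {\<omega>. X (Suc n) \<omega> \<notin> Nb (xs n)}) = 0"
proof -
  interpret prob_space M by (rule ps)
  have cs: "cyl M X n xs \<in> sets M" by (rule cyl_sets[OF Xm])
  have s1: "cyl M X n xs \<inter> {\<omega>. X (Suc n) \<omega> \<in> Nb (xs n)} \<in> sets M"
  proof -
    have "{\<omega>\<in>space M. X (Suc n) \<omega> \<in> Nb (xs n)} \<in> sets M" by (rule Zset[OF Xm])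
    moreover have "cyl M X n xs \<inter> {\<omega>. X (Suc n) \<omega> \<in> Nb (xs n)} = cyl M X n xs \<inter> {\<omega>\<in>space M. X (Suc n) \<omega> \<in> Nb (xs n)}"
      using cs sets.sets_into_space by blast
    ultimately show ?thesis using cs by auto
  qed
  have d: "cyl M X n xs \<inter> {\<omega>. X (Suc n) \<omega> \<notin> Nb (xs n)} = cyl M X n xs - (cyl M X n xs \<inter> {\<omega>. X (Suc n) \<omega> \<in> Nb (xs n)})"
    by blast
  show ?thesis
  proof (cases "xs n \<in> G_verts")
    case True
    have "measure M (cyl M X n xs \<inter> {\<omega>. X (Suc n) \<omega> \<in> Nb (xs n)}) = (\<Sum>y\<in>Nb (xs n). measure M (cyl M X n xs \<inter> {\<omega>. X (Suc n) \<omega> = y}))"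
      by (rule measure_sum_vals[OF ps Xm cs finite_Nb])
    also have "\<dots> = measure M (cyl M X n xs) * (\<Sum>y\<in>Nb (xs n). P (xs n) y)"
      by (simp add: Mk sum_distrib_left)
    also have "\<dots> = measure M (cyl M X n xs)" using P_sum1[OF True] by simp
    finally show ?thesis unfolding d by (subst finite_measure_Diff) (use cs s1 in auto)
  next
    case False
    then have "measure M (cyl M X n xs) = 0" by (rule cyl_junk)
    moreover have "measure M (cyl M X n xs \<inter> {\<omega>. X (Suc n) \<omega> \<notin> Nb (xs n)}) \<le> measure M (cyl M X n xs)"
      by (rule finite_measure_mono) (use cs in auto)
    ultimately show ?thesis using measure_nonneg[of M] by (simp add: antisym)
  qed
qed

lemma stay_eq: "measure M (cyl M X m xs \<inter> stay M X S m N) = measure M (cyl M X m xs) * Rk P Nb S m N (xs m)"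
  by (rule markov_stay[OF ps Xm finite_Nb Mk Nl])

end



definition fl :: "int \<Rightarrow> real" where
  "fl l = (if even l then (1/2) ^ nat (l div 2) else 3/4 * (1/2) ^ nat (l div 2))"

lemma fl_pos: "fl l > 0" by (simp add: fl_def)

lemma fl_e: "fl (2 * int n) = (1/2) ^ n" by (simp add: fl_def)
lemma fl_o: "fl (2 * int n + 1) = 3/4 * (1/2) ^ n"
proof -
  have "(2 * int n + 1) div 2 = int n" by presburger
  then show ?thesis by (simp add: fl_def)
qed
lemma fl_e2: "fl (2 * int n + 2) = (1/2) ^ Suc n"
proof -
  have "2 * int n + 2 = 2 * int (Suc n)" by simp
  then show ?thesis by (simp only: fl_e)
qed
lemma fl_o3: "fl (2 * int n + 3) = 3/4 * (1/2) ^ Suc n"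
proof -
  have "2 * int n + 3 = 2 * int (Suc n) + 1" by simp
  then show ?thesis by (simp only: fl_o)
qed

lemma LK_Z0: "LK (Z 0) F = F 1" by simp
lemma LK_ZS: "LK (Z (Suc m)) F = 2/3 * F (2 * int m + 3) + 1/3 * F (2 * int m + 1)"
proof -
  have "2 * int (Suc m) + 1 = 2 * int m + 3" "2 * int (Suc m) - 1 = 2 * int m + 1" by simp_all
  then show ?thesis by (simp only: LK.simps nat.distinct if_False)
qed
lemma LK_Mid: "LK (Mid n k) F = 1/2 * F (2 * int n) + 1/2 * F (2 * int n + 2)" by simp

lemma lv_Z_S: "lv (Z (Suc m)) = 2 * int (Suc m)" by simp

lemma G1:
  assumes "x \<in> G_verts" "c0 > 0"
  shows "LK x (\<lambda>l. min 1 (fl l / c0)) \<le> min 1 (fl (lv x) / c0)"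
proof (cases x)
  case (Z n)
  show ?thesis
  proof (cases n)
    case 0
    have "3 / (4 * c0) \<le> 1 / c0" using assms by (simp add: field_simps)
    then have "min 1 (3 / (4 * c0)) \<le> min 1 (1 / c0)" by (rule min.mono[OF order.refl])
    then show ?thesis using Z 0 by (simp add: fl_def)
  next
    case (Suc m)
    define q where "q = (1/2::real) ^ m / c0"
    have q: "q > 0" using assms unfolding q_def by simp
    have e: "fl (2 * int m + 3) / c0 = 3/8 * q" "fl (2 * int m + 1) / c0 = 3/4 * q"
      "fl (lv (Z (Suc m))) / c0 = 1/2 * q"
      unfolding q_def by (simp_all only: fl_o3 fl_o lv_Z_S fl_e, (simp_all add: field_simps)?)
    show ?thesis unfolding Z Suc LK_ZS using q by (simp only: e, (simp add: min_def)?)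
  qed
next
  case (Mid n k)
  define q where "q = (1/2::real) ^ n / c0"
  have q: "q > 0" using assms unfolding q_def by simp
  have e: "fl (2 * int n) / c0 = q" "fl (2 * int n + 2) / c0 = 1/2 * q"
    "fl (lv (Mid n k)) / c0 = 3/4 * q"
    unfolding q_def by (simp_all only: fl_e2 fl_o fl_e lv.simps, (simp_all add: field_simps)?)
  show ?thesis unfolding Mid LK_Mid using q by (simp only: e, (simp add: min_def)?)
qed

lemma G2:
  assumes "v \<in> G_verts"
  shows "LK v (\<lambda>l. min 1 (fl l / fl (lv v))) \<le> 5/6"
proof (cases v)
  case (Z n)
  show ?thesis
  proof (cases n)
    case 0
    then show ?thesis using Z by (simp add: fl_def)
  next
    case (Suc m)
    define q where "q = (1/2::real) ^ m"
    have q: "q > 0" unfolding q_def by simp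
    have e: "fl (2 * int m + 3) / fl (lv (Z (Suc m))) = 3/4" "fl (2 * int m + 1) / fl (lv (Z (Suc m))) = 3/2"
      by (simp_all only: fl_o3 fl_o lv_Z_S fl_e, (simp_all add: field_simps)?)
    show ?thesis unfolding Z Suc LK_ZS by (simp only: e, simp?)
  qed
next
  case (Mid n k)
  have e: "fl (2 * int n) / fl (lv (Mid n k)) = 4/3" "fl (2 * int n + 2) / fl (lv (Mid n k)) = 2/3"
    by (simp_all only: fl_e2 fl_o fl_e lv.simps, (simp_all add: field_simps)?)
  show ?thesis unfolding Mid LK_Mid by (simp only: e, simp?)
qed

lemma LK_lin: "LK x (\<lambda>l. 1 - F l) = 1 - LK x F"
  by (cases x) (auto simp: algebra_simps)

definition gg :: "vtx \<Rightarrow> vtx \<Rightarrow> real" where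
  "gg v y = min 1 (fl (lv y) / fl (lv v))"

lemma step_bound:
  assumes s: "s \<in> G_verts" and R: "\<And>t. t \<in> Nb s \<Longrightarrow> t \<noteq> v \<Longrightarrow> R t \<ge> 1 - gg v t"
  shows "(\<Sum>t\<in>Nb s \<inter> - {v}. P s t * R t) \<ge> 1 - LK s (\<lambda>l. min 1 (fl l / fl (lv v)))"
proof -
  have "(\<Sum>t\<in>Nb s \<inter> - {v}. P s t * R t) \<ge> (\<Sum>t\<in>Nb s \<inter> - {v}. P s t * (1 - gg v t))"
    by (rule sum_mono) (use R P_nonneg in \<open>auto intro: mult_left_mono\<close>)
  moreover have "(\<Sum>t\<in>Nb s \<inter> - {v}. P s t * (1 - gg v t)) = (\<Sum>t\<in>Nb s. P s t * (1 - gg v t))"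
    by (rule sum.mono_neutral_left) (use fl_pos[of "lv v"] in \<open>auto simp: finite_Nb gg_def\<close>)
  moreover have "(\<Sum>t\<in>Nb s. P s t * (1 - gg v t)) = 1 - LK s (\<lambda>l. min 1 (fl l / fl (lv v)))"
    unfolding gg_def using sumN[OF s, of "\<lambda>l. 1 - min 1 (fl l / fl (lv v))"] LK_lin by simp
  ultimately show ?thesis by simp
qed

lemma R1:
  assumes "s \<in> G_verts" "s \<noteq> v"
  shows "Rk P Nb (\<lambda>_. - {v}) m N s \<ge> 1 - gg v s"
  using assms
proof (induction N arbitrary: m s)
  case 0
  then show ?case using fl_pos[of "lv s"] fl_pos[of "lv v"] by (simp add: gg_def)
next
  case (Suc N)
  have "Rk P Nb (\<lambda>_. - {v}) m (Suc N) s \<ge> 1 - LK s (\<lambda>l. min 1 (fl l / fl (lv v)))"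
    unfolding Rk.simps by (rule step_bound[OF Suc.prems(1)]) (use Suc.IH Nb_props(2) in blast)
  moreover have "LK s (\<lambda>l. min 1 (fl l / fl (lv v))) \<le> gg v s"
    unfolding gg_def by (rule G1[OF Suc.prems(1) fl_pos])
  ultimately show ?case by simp
qed

lemma R1v:
  assumes "v \<in> G_verts"
  shows "Rk P Nb (\<lambda>_. - {v}) m N v \<ge> 1/6"
proof (cases N)
  case 0 then show ?thesis by simp
next
  case (Suc N')
  have "Rk P Nb (\<lambda>_. - {v}) m (Suc N') v \<ge> 1 - LK v (\<lambda>l. min 1 (fl l / fl (lv v)))"
    unfolding Rk.simps by (rule step_bound[OF assms]) (use R1 Nb_props(2) in blast)
  then show ?thesis using G2[OF assms] Suc by simp
qed

context walk begin

theorem transient: "measure M {\<omega> \<in> space M. \<exists>n>0. X n \<omega> = v} < 1"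
proof -
  interpret prob_space M by (rule ps)
  define A where "A N = stay M X (\<lambda>_. - {v}) 0 N" for N
  have As: "range A \<subseteq> sets M" unfolding A_def using stay_sets[where W=X, OF Xm] by blast
  have dec: "decseq A" unfolding decseq_def A_def stay_def by auto
  have lb: "measure M (A N) \<ge> 1/6" for N
  proof -
    have "measure M (A N) \<ge> measure M (cyl M X 0 (\<lambda>_. v) \<inter> A N)"
      by (rule finite_measure_mono) (use As in auto)
    also have "measure M (cyl M X 0 (\<lambda>_. v) \<inter> A N) = Rk P Nb (\<lambda>_. - {v}) 0 N v"
      unfolding A_def stay_eq cyl0 by simp
    finally show ?thesis using R1v[OF vv, of 0 N] by simp
  qed
  have lim: "(\<lambda>N. measure M (A N)) \<longlonglongrightarrow> measure M (\<Inter>N. A N)"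
    by (rule finite_Lim_measure_decseq[OF As dec])
  have "1/6 \<le> measure M (\<Inter>N. A N)"
    by (rule LIMSEQ_le_const[OF lim]) (use lb in auto)
  moreover have "{\<omega> \<in> space M. \<exists>n>0. X n \<omega> = v} = space M - (\<Inter>N. A N)"
    unfolding A_def stay_def by auto
  moreover have "(\<Inter>N. A N) \<in> sets M" using As by auto
  ultimately show ?thesis using prob_compl by simp
qed

end



instance vtx :: countable by countable_datatype

definition q2 :: "vtx \<times> vtx \<Rightarrow> vtx \<times> vtx \<Rightarrow> real" where
  "q2 s t = P (fst s) (fst t) * P (snd s) (snd t)"
definition F2 :: "vtx \<times> vtx \<Rightarrow> (vtx \<times> vtx) set" where
  "F2 s = Nb (fst s) \<times> Nb (snd s)"

lemma finite_F2: "finite (F2 s)" unfolding F2_def by (simp add: finite_Nb)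

locale pairw =
  X: walk M X v + Y: walk M Y v
  for M :: "'s measure" and X Y :: "nat \<Rightarrow> 's \<Rightarrow> vtx" and v +
  assumes ind: "indep_processes M X Y"
begin

definition Wp :: "nat \<Rightarrow> 's \<Rightarrow> vtx \<times> vtx" where "Wp n \<omega> = (X n \<omega>, Y n \<omega>)"

lemma Wpm: "Wp n \<in> measurable M (count_space UNIV)"
proof -
  have "Wp n -` {a} \<inter> space M \<in> sets M" for a
  proof -
    have "Wp n -` {a} \<inter> space M = {\<omega>\<in>space M. X n \<omega> = fst a} \<inter> {\<omega>\<in>space M. Y n \<omega> = snd a}"
      by (cases a) (auto simp: Wp_def)
    moreover have "{\<omega>\<in>space M. X n \<omega> = fst a} \<in> sets M" by (rule Zset[OF X.Xm])
    moreover have "{\<omega>\<in>space M. Y n \<omega> = snd a} \<in> sets M" by (rule Zset[OF Y.Xm])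
    ultimately show ?thesis by auto
  qed
  then show ?thesis by (subst measurable_count_space_eq2_countable) auto
qed

lemma cylPi: "{f :: nat \<Rightarrow> vtx. \<forall>i\<le>n. f i = xs i} \<in> sets (Pi\<^sub>M UNIV (\<lambda>_. count_space UNIV))"
proof -
  have "cyl (Pi\<^sub>M UNIV (\<lambda>_. count_space UNIV)) (\<lambda>i f. f i) n xs \<in> sets (Pi\<^sub>M UNIV (\<lambda>_. count_space (UNIV :: vtx set)))"
    by (rule cyl_sets) (rule measurable_component_singleton, simp)
  moreover have "cyl (Pi\<^sub>M UNIV (\<lambda>_. count_space UNIV)) (\<lambda>i f. f i) n xs = {f :: nat \<Rightarrow> vtx. \<forall>i\<le>n. f i = xs i}"
    unfolding cyl_def by (auto simp: space_PiM)
  ultimately show ?thesis by simp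
qed

lemma indep_cyl: "measure M (cyl M X n xs \<inter> cyl M Y m ys) = measure M (cyl M X n xs) * measure M (cyl M Y m ys)"
proof -
  interpret prob_space M by (rule X.ps)
  define S where "S = (Pi\<^sub>M UNIV (\<lambda>_. count_space UNIV) :: (nat \<Rightarrow> vtx) measure)"
  have iv: "indep_var S (\<lambda>\<omega> n. X n \<omega>) S (\<lambda>\<omega> n. Y n \<omega>)"
    using ind unfolding indep_processes_def S_def .
  then have "indep_set
      (sigma_sets (space M) { (\<lambda>\<omega> n. X n \<omega>) -` A \<inter> space M | A. A \<in> sets S})
      (sigma_sets (space M) { (\<lambda>\<omega> n. Y n \<omega>) -` A \<inter> space M | A. A \<in> sets S})"
    unfolding indep_var_eq by blast
  then have h: "\<forall>a\<in>sigma_sets (space M) { (\<lambda>\<omega> n. X n \<omega>) -` A \<inter> space M | A. A \<in> sets S}.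
      \<forall>b\<in>sigma_sets (space M) { (\<lambda>\<omega> n. Y n \<omega>) -` A \<inter> space M | A. A \<in> sets S}. prob (a \<inter> b) = prob a * prob b"
    unfolding indep_sets2_eq by blast
  have a: "cyl M X n xs \<in> sigma_sets (space M) { (\<lambda>\<omega> n. X n \<omega>) -` A \<inter> space M | A. A \<in> sets S}"
  proof (rule sigma_sets.Basic, rule CollectI, intro exI conjI)
    show "{f. \<forall>i\<le>n. f i = xs i} \<in> sets S" unfolding S_def by (rule cylPi)
    show "cyl M X n xs = (\<lambda>\<omega> n. X n \<omega>) -` {f. \<forall>i\<le>n. f i = xs i} \<inter> space M"
      unfolding cyl_def by auto
  qed
  have b: "cyl M Y m ys \<in> sigma_sets (space M) { (\<lambda>\<omega> n. Y n \<omega>) -` A \<inter> space M | A. A \<in> sets S}"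
  proof (rule sigma_sets.Basic, rule CollectI, intro exI conjI)
    show "{f. \<forall>i\<le>m. f i = ys i} \<in> sets S" unfolding S_def by (rule cylPi)
    show "cyl M Y m ys = (\<lambda>\<omega> n. Y n \<omega>) -` {f. \<forall>i\<le>m. f i = ys i} \<inter> space M"
      unfolding cyl_def by auto
  qed
  show ?thesis using h a b by blast
qed

lemma cyl_pair: "cyl M Wp n zs = cyl M X n (fst \<circ> zs) \<inter> cyl M Y n (snd \<circ> zs)"
  unfolding cyl_def Wp_def by (auto simp: prod_eq_iff)

lemma Mk2: "measure M (cyl M Wp n zs \<inter> {\<omega>. Wp (Suc n) \<omega> = t}) = measure M (cyl M Wp n zs) * q2 (zs n) t"
proof -
  have "cyl M Wp n zs \<inter> {\<omega>. Wp (Suc n) \<omega> = t} =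
     (cyl M X n (fst \<circ> zs) \<inter> {\<omega>. X (Suc n) \<omega> = fst t}) \<inter> (cyl M Y n (snd \<circ> zs) \<inter> {\<omega>. Y (Suc n) \<omega> = snd t})"
    unfolding cyl_pair Wp_def by (auto simp: prod_eq_iff)
  also have "\<dots> = cyl M X (Suc n) ((fst \<circ> zs)(Suc n := fst t)) \<inter> cyl M Y (Suc n) ((snd \<circ> zs)(Suc n := snd t))"
    by (simp add: cyl_Suc)
  finally have e: "cyl M Wp n zs \<inter> {\<omega>. Wp (Suc n) \<omega> = t} = \<dots>" .
  have "measure M (cyl M X (Suc n) ((fst \<circ> zs)(Suc n := fst t))) = measure M (cyl M X n (fst \<circ> zs)) * P (fst (zs n)) (fst t)"
    unfolding cyl_Suc X.Mk by simp
  moreover have "measure M (cyl M Y (Suc n) ((snd \<circ> zs)(Suc n := snd t))) = measure M (cyl M Y n (snd \<circ> zs)) * P (snd (zs n)) (snd t)"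
    unfolding cyl_Suc Y.Mk by simp
  ultimately show ?thesis unfolding e indep_cyl
    by (simp add: cyl_pair indep_cyl q2_def)
qed

lemma Nl2: "measure M (cyl M Wp n zs \<inter> {\<omega>. Wp (Suc n) \<omega> \<notin> F2 (zs n)}) = 0"
proof -
  interpret prob_space M by (rule X.ps)
  let ?A = "cyl M X n (fst \<circ> zs) \<inter> {\<omega>. X (Suc n) \<omega> \<notin> Nb ((fst \<circ> zs) n)}"
  let ?B = "cyl M Y n (snd \<circ> zs) \<inter> {\<omega>. Y (Suc n) \<omega> \<notin> Nb ((snd \<circ> zs) n)}"
  have sA: "?A \<in> sets M"
  proof -
    have "?A = cyl M X n (fst \<circ> zs) \<inter> {\<omega>\<in>space M. X (Suc n) \<omega> \<notin> Nb ((fst \<circ> zs) n)}"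
      unfolding cyl_def by blast
    moreover have "{\<omega>\<in>space M. X (Suc n) \<omega> \<notin> Nb ((fst \<circ> zs) n)} \<in> sets M" by (rule Zset[OF X.Xm])
    ultimately show ?thesis using cyl_sets[where W=X, OF X.Xm] by auto
  qed
  have sB: "?B \<in> sets M"
  proof -
    have "?B = cyl M Y n (snd \<circ> zs) \<inter> {\<omega>\<in>space M. Y (Suc n) \<omega> \<notin> Nb ((snd \<circ> zs) n)}"
      unfolding cyl_def by blast
    moreover have "{\<omega>\<in>space M. Y (Suc n) \<omega> \<notin> Nb ((snd \<circ> zs) n)} \<in> sets M" by (rule Zset[OF Y.Xm])
    ultimately show ?thesis using cyl_sets[where W=Y, OF Y.Xm] by auto
  qed
  have "cyl M Wp n zs \<inter> {\<omega>. Wp (Suc n) \<omega> \<notin> F2 (zs n)} \<subseteq> ?A \<union> ?B"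
    unfolding cyl_pair Wp_def F2_def by auto
  then have "measure M (cyl M Wp n zs \<inter> {\<omega>. Wp (Suc n) \<omega> \<notin> F2 (zs n)}) \<le> measure M (?A \<union> ?B)"
    by (rule finite_measure_mono) (use sA sB in auto)
  also have "\<dots> \<le> measure M ?A + measure M ?B" by (rule measure_Un_le) (use sA sB in auto)
  also have "\<dots> = 0" using X.Nl[of n "fst \<circ> zs"] Y.Nl[of n "snd \<circ> zs"] by simp
  finally show ?thesis using measure_nonneg[of M] by (simp add: antisym)
qed

lemma stay_eq2: "measure M (cyl M Wp m zs \<inter> stay M Wp S m N) = measure M (cyl M Wp m zs) * Rk q2 F2 S m N (zs m)"
  by (rule markov_stay[OF X.ps Wpm finite_F2 Mk2 Nl2])

lemma cyl0_2: "measure M (cyl M Wp 0 (\<lambda>_. (v, v))) = 1"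
  unfolding cyl_pair indep_cyl by (simp add: X.cyl0 Y.cyl0)

end



definition pd :: "real \<Rightarrow> int \<Rightarrow> real" where
  "pd c x = (2*c+4) * real_of_int \<bar>x\<bar> - (real_of_int x)^2 + 2*(2*c+4)"
definition pv :: "int \<Rightarrow> real" where
  "pv x = real_of_int \<bar>x\<bar> + 2"

lemma pd_i:
  assumes "d \<le> -2" "real_of_int \<bar>d\<bar> < c"
  shows "2/3 * pd c d + 1/3 * pd c (d+2) \<le> pd c d - 1"
proof -
  have a: "\<bar>d+2\<bar> = -(d+2)" "\<bar>d\<bar> = -d" using assms by arith+
  have "pd c (d+2) - pd c d = -2*(2*c+4) - 4 * real_of_int d - 4"
    unfolding pd_def a by (simp add: power2_eq_square algebra_simps)
  then show ?thesis using assms a by simp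
qed

lemma pd_ii:
  assumes "d \<ge> 2" "real_of_int \<bar>d\<bar> < c"
  shows "2/3 * pd c d + 1/3 * pd c (d-2) \<le> pd c d - 1"
proof -
  have a: "\<bar>d-2\<bar> = d-2" "\<bar>d\<bar> = d" using assms by arith+
  have "pd c (d-2) - pd c d = -2*(2*c+4) + 4 * real_of_int d - 4"
    unfolding pd_def a by (simp add: power2_eq_square algebra_simps)
  then show ?thesis using assms a by simp
qed

lemma pd_pm:
  assumes "\<bar>d\<bar> \<ge> 2"
  shows "pd c (d+2) + pd c (d-2) = 2 * pd c d - 8"
proof -
  have a: "real_of_int \<bar>d+2\<bar> + real_of_int \<bar>d-2\<bar> = 2 * real_of_int \<bar>d\<bar>" using assms by arith
  have b: "(2*c+4) * real_of_int \<bar>d+2\<bar> + (2*c+4) * real_of_int \<bar>d-2\<bar> = 2 * ((2*c+4) * real_of_int \<bar>d\<bar>)"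
    using arg_cong[OF a, of "\<lambda>t. (2*c+4) * t"] by (simp add: algebra_simps)
  have "(real_of_int (d+2))^2 + (real_of_int (d-2))^2 = 2 * (real_of_int d)^2 + 8"
    by (simp add: power2_eq_square algebra_simps)
  then show ?thesis using b unfolding pd_def by simp
qed

lemma pd_iii:
  assumes "\<bar>d\<bar> \<ge> 2"
  shows "5/9 * pd c d + 2/9 * pd c (d+2) + 2/9 * pd c (d-2) \<le> pd c d - 1"
  using pd_pm[OF assms, of c] by simp

lemma pd_iv:
  assumes "\<bar>d\<bar> \<ge> 2"
  shows "1/2 * pd c d + 1/4 * pd c (d-2) + 1/4 * pd c (d+2) \<le> pd c d - 1"
  using pd_pm[OF assms, of c] by simp

lemma pd_v:
  assumes "c \<ge> 0"
  shows "1/4 * pd c (-2) + 1/4 * pd c 2 \<le> pd c 0 - 1"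
  using assms by (simp add: pd_def)

lemma pd_nonneg:
  assumes "real_of_int \<bar>x\<bar> \<le> 2*c+4" "c \<ge> 0"
  shows "pd c x \<ge> 0"
proof -
  have "(real_of_int x)^2 = real_of_int \<bar>x\<bar> * real_of_int \<bar>x\<bar>" by (simp add: power2_eq_square flip: of_int_mult)
  moreover have "real_of_int \<bar>x\<bar> * real_of_int \<bar>x\<bar> \<le> (2*c+4) * real_of_int \<bar>x\<bar>"
    by (rule mult_right_mono) (use assms in auto)
  ultimately show ?thesis unfolding pd_def using assms by simp
qed

lemma pd_le: "real_of_int \<bar>x\<bar> \<le> c \<Longrightarrow> c \<ge> 0 \<Longrightarrow> pd c x \<le> (2*c+4)*c + 2*(2*c+4)"
proof -
  assume h: "real_of_int \<bar>x\<bar> \<le> c" "c \<ge> 0"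
  have "(2*c+4) * real_of_int \<bar>x\<bar> \<le> (2*c+4)*c" by (rule mult_left_mono) (use h in auto)
  then show ?thesis unfolding pd_def by (smt (verit) zero_le_power2)
qed

lemma pv_i: "d \<le> -2 \<Longrightarrow> 2/3 * pv d + 1/3 * pv (d+2) \<le> pv d"
proof -
  assume "d \<le> -2"
  then have "\<bar>d\<bar> = -d" "\<bar>d+2\<bar> = -d-2" by arith+
  then show ?thesis by (simp add: pv_def field_simps)
qed
lemma pv_ii: "d \<ge> 2 \<Longrightarrow> 2/3 * pv d + 1/3 * pv (d-2) \<le> pv d"
proof -
  assume "d \<ge> 2"
  then have "\<bar>d\<bar> = d" "\<bar>d-2\<bar> = d-2" by arith+
  then show ?thesis by (simp add: pv_def field_simps)
qed
lemma pv_pm: "\<bar>d\<bar> \<ge> 2 \<Longrightarrow> pv (d+2) + pv (d-2) = 2 * pv d"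
proof -
  assume "\<bar>d\<bar> \<ge> 2"
  then have "\<bar>d+2\<bar> + \<bar>d-2\<bar> = 2 * \<bar>d\<bar>" by arith
  then have "real_of_int \<bar>d+2\<bar> + real_of_int \<bar>d-2\<bar> = 2 * real_of_int \<bar>d\<bar>"
    by (metis of_int_add of_int_mult of_int_numeral)
  then show ?thesis by (simp add: pv_def)
qed
lemma pv_iii: "\<bar>d\<bar> \<ge> 2 \<Longrightarrow> 5/9 * pv d + 2/9 * pv (d+2) + 2/9 * pv (d-2) \<le> pv d"
  using pv_pm[of d] by simp
lemma pv_iv: "\<bar>d\<bar> \<ge> 2 \<Longrightarrow> 1/2 * pv d + 1/4 * pv (d-2) + 1/4 * pv (d+2) \<le> pv d"
  using pv_pm[of d] by simp
lemma pv_v: "1/4 * pv (-2) + 1/4 * pv 2 \<le> pv 0" by (simp add: pv_def)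



definition D2 :: "vtx \<times> vtx \<Rightarrow> int" where "D2 s = lv (fst s) - lv (snd s)"
definition inv2 :: "vtx \<times> vtx \<Rightarrow> bool" where
  "inv2 s \<longleftrightarrow> fst s \<in> G_verts \<and> snd s \<in> G_verts \<and> (isZ (fst s) \<longleftrightarrow> isZ (snd s))"

lemma LK_mono: "(\<And>i. F i \<le> G i) \<Longrightarrow> LK x F \<le> LK x G"
  by (cases x) (auto intro!: add_mono mult_left_mono)

lemma sumF2:
  assumes "fst s \<in> G_verts" "snd s \<in> G_verts"
  shows "(\<Sum>t\<in>F2 s. q2 s t * H (lv (fst t)) (lv (snd t))) = LK (fst s) (\<lambda>i. LK (snd s) (\<lambda>j. H i j))"
proof -
  have "(\<Sum>t\<in>F2 s. q2 s t * H (lv (fst t)) (lv (snd t)))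
      = (\<Sum>a\<in>Nb (fst s). \<Sum>b\<in>Nb (snd s). P (fst s) a * (P (snd s) b * H (lv a) (lv b)))"
    unfolding F2_def q2_def sum.cartesian_product by (rule sum.cong) (auto simp: mult.assoc)
  also have "\<dots> = (\<Sum>a\<in>Nb (fst s). P (fst s) a * LK (snd s) (\<lambda>j. H (lv a) j))"
    by (simp add: sum_distrib_left[symmetric] sumN[OF assms(2)])
  also have "\<dots> = LK (fst s) (\<lambda>i. LK (snd s) (\<lambda>j. H i j))"
    by (rule sumN[OF assms(1)])
  finally show ?thesis .
qed

lemma q2_nonneg: "q2 s t \<ge> 0" by (simp add: q2_def P_nonneg)

lemma q2_sum_le1: "(\<Sum>t\<in>F2 s. q2 s t) \<le> 1"
proof -
  have "(\<Sum>t\<in>F2 s. q2 s t) = (\<Sum>a\<in>Nb (fst s). P (fst s) a) * (\<Sum>b\<in>Nb (snd s). P (snd s) b)"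
    unfolding F2_def q2_def sum.cartesian_product sum_product by (rule sum.cong) auto
  also have "\<dots> \<le> 1 * 1"
    by (rule mult_mono) (auto simp: P_sum_le1 sum_nonneg P_nonneg)
  finally show ?thesis by simp
qed

lemma F2_props:
  assumes "t \<in> F2 s" "inv2 s"
  shows "inv2 t" "\<bar>D2 t - D2 s\<bar> \<le> 2"
proof -
  have a: "fst t \<in> Nb (fst s)" "snd t \<in> Nb (snd s)" using assms(1) unfolding F2_def by auto
  show "inv2 t" using Nb_props[OF a(1)] Nb_props[OF a(2)] assms(2) unfolding inv2_def by auto
  show "\<bar>D2 t - D2 s\<bar> \<le> 2" using Nb_props(4)[OF a(1)] Nb_props(4)[OF a(2)] unfolding D2_def by arith
qed

lemma lv_eq_even: "lv a = lv b \<Longrightarrow> even (lv a) \<Longrightarrow> a = b"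
proof (cases a; cases b)
  fix n m assume "a = Z n" "b = Z m" "lv a = lv b" then show "a = b" by simp
next
  fix n k m assume "a = Z n" "b = Mid m k" "lv a = lv b" then show "a = b" by simp presburger
next
  fix n k m assume "a = Mid m k" "b = Z n" "lv a = lv b" then show "a = b" by simp presburger
next
  fix n k m k' assume "a = Mid m k" "b = Mid n k'" "even (lv a)" then show "a = b" by simp
qed

lemma Kgen:
  assumes s: "inv2 s" "fst s \<noteq> snd s" and cc: "real_of_int \<bar>D2 s\<bar> < cc"
    and Hle: "\<And>i j. H i j \<le> g (i - j)" and H0: "\<And>i. even i \<Longrightarrow> H i i = 0"
    and h1: "\<And>d. d \<le> -2 \<Longrightarrow> real_of_int \<bar>d\<bar> < cc \<Longrightarrow> 2/3 * g d + 1/3 * g (d+2) \<le> g d - \<kappa>"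
    and h2: "\<And>d. d \<ge> 2 \<Longrightarrow> real_of_int \<bar>d\<bar> < cc \<Longrightarrow> 2/3 * g d + 1/3 * g (d-2) \<le> g d - \<kappa>"
    and h3: "\<And>d. \<bar>d\<bar> \<ge> 2 \<Longrightarrow> real_of_int \<bar>d\<bar> < cc \<Longrightarrow> 5/9 * g d + 2/9 * g (d+2) + 2/9 * g (d-2) \<le> g d - \<kappa>"
    and h4: "\<And>d. \<bar>d\<bar> \<ge> 2 \<Longrightarrow> real_of_int \<bar>d\<bar> < cc \<Longrightarrow> 1/2 * g d + 1/4 * g (d-2) + 1/4 * g (d+2) \<le> g d - \<kappa>"
    and h5: "1/4 * g (-2) + 1/4 * g 2 \<le> g 0 - \<kappa>"
  shows "LK (fst s) (\<lambda>i. LK (snd s) (\<lambda>j. H i j)) \<le> g (D2 s) - \<kappa>"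
proof -
  obtain a b where ab: "s = (a, b)" by (cases s)
  have le: "LK a (\<lambda>i. LK b (\<lambda>j. H i j)) \<le> LK a (\<lambda>i. LK b (\<lambda>j. g (i - j)))"
    by (intro LK_mono Hle)
  define d where "d = D2 s"
  have dcc: "real_of_int \<bar>d\<bar> < cc" using cc d_def by simp
  show ?thesis
  proof (cases a)
    case (Z n)
    then obtain m where bZ: "b = Z m" using s ab unfolding inv2_def by (cases b) auto
    show ?thesis
    proof (cases n)
      case 0
      then obtain m' where m: "m = Suc m'" using s ab Z bZ by (cases m) auto
      have dd: "d = - 2 * int m' - 2" unfolding d_def D2_def using ab Z bZ 0 m by simp
      have e: "1 - (2 * int m' + 3) = d" "1 - (2 * int m' + 1) = d + 2" using dd by simp_all
      have "LK a (\<lambda>i. LK b (\<lambda>j. g (i - j))) = 2/3 * g d + 1/3 * g (d+2)"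
        unfolding Z bZ 0 m LK_Z0 LK_ZS e ..
      also have "\<dots> \<le> g d - \<kappa>" by (rule h1) (use dd dcc in auto)
      finally show ?thesis using le ab d_def by simp
    next
      case (Suc n')
      show ?thesis
      proof (cases m)
        case 0
        have dd: "d = 2 * int n' + 2" unfolding d_def D2_def using ab Z bZ Suc 0 by simp
        have e: "2 * int n' + 3 - 1 = d" "2 * int n' + 1 - 1 = d - 2" using dd by simp_all
        have "LK a (\<lambda>i. LK b (\<lambda>j. g (i - j))) = 2/3 * g d + 1/3 * g (d-2)"
          unfolding Z bZ 0 Suc LK_Z0 LK_ZS e ..
        also have "\<dots> \<le> g d - \<kappa>" by (rule h2) (use dd dcc in auto)
        finally show ?thesis using le ab d_def by simp
      next
        case (Suc m')
        have nm: "n' \<noteq> m'" using s ab Z bZ Suc \<open>n = Suc n'\<close> by auto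
        have dd: "d = 2 * int n' - 2 * int m'" unfolding d_def D2_def using ab Z bZ Suc \<open>n = Suc n'\<close> by simp
        have e: "2 * int n' + 3 - (2 * int m' + 3) = d" "2 * int n' + 3 - (2 * int m' + 1) = d + 2"
          "2 * int n' + 1 - (2 * int m' + 3) = d - 2" "2 * int n' + 1 - (2 * int m' + 1) = d" using dd by simp_all
        have "LK a (\<lambda>i. LK b (\<lambda>j. g (i - j))) = 5/9 * g d + 2/9 * g (d+2) + 2/9 * g (d-2)"
          unfolding Z bZ Suc \<open>n = Suc n'\<close> LK_ZS e by (simp add: field_simps)
        also have "\<dots> \<le> g d - \<kappa>" by (rule h3) (use dd dcc nm in auto)
        finally show ?thesis using le ab d_def by simp
      qed
    qed
  next
    case (Mid n k)
    then obtain m k' where bM: "b = Mid m k'" using s ab unfolding inv2_def by (cases b) auto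
    have dd: "d = 2 * int n - 2 * int m" unfolding d_def D2_def using ab Mid bM by simp
    show ?thesis
    proof (cases "n = m")
      case True
      have "LK a (\<lambda>i. LK b (\<lambda>j. H i j)) = 1/4 * H (2 * int n) (2 * int n + 2) + 1/4 * H (2 * int n + 2) (2 * int n)"
        unfolding Mid bM LK_Mid True using H0[of "2 * int m"] H0[of "2 * int m + 2"] by simp
      also have "\<dots> \<le> 1/4 * g (-2) + 1/4 * g 2" using Hle[of "2 * int n" "2 * int n + 2"] Hle[of "2 * int n + 2" "2 * int n"] by simp
      also have "\<dots> \<le> g 0 - \<kappa>" by (rule h5)
      finally show ?thesis using ab d_def dd True by simp
    next
      case False
      have e: "2 * int n - 2 * int m = d" "2 * int n - (2 * int m + 2) = d - 2"
          "2 * int n + 2 - 2 * int m = d + 2" "2 * int n + 2 - (2 * int m + 2) = d" using dd by simp_all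
      have "LK a (\<lambda>i. LK b (\<lambda>j. g (i - j))) = 1/2 * g d + 1/4 * g (d-2) + 1/4 * g (d+2)"
        unfolding Mid bM LK_Mid e by (simp add: field_simps)
      also have "\<dots> \<le> g d - \<kappa>" by (rule h4) (use dd dcc False in auto)
      finally show ?thesis using le ab d_def by simp
    qed
  qed
qed



definition alive :: "(vtx \<times> vtx) set" where "alive = {s. fst s \<noteq> snd s}"
definition strip :: "real \<Rightarrow> (vtx \<times> vtx) set" where
  "strip c = {s. fst s \<noteq> snd s \<and> real_of_int \<bar>D2 s\<bar> < c}"
definition HV :: "int \<Rightarrow> int \<Rightarrow> real" where
  "HV i j = (if i = j \<and> even i then 0 else pv (i - j))"
definition HP :: "real \<Rightarrow> int \<Rightarrow> int \<Rightarrow> real" where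
  "HP c i j = (if i = j \<and> even i then 0 else pd c (i - j))"

lemma KV:
  assumes "inv2 s" "fst s \<noteq> snd s"
  shows "LK (fst s) (\<lambda>i. LK (snd s) (\<lambda>j. HV i j)) \<le> pv (D2 s) - 0"
proof (rule Kgen[OF assms, where cc="real_of_int \<bar>D2 s\<bar> + 1"])
  show "HV i j \<le> pv (i - j)" for i j by (auto simp: HV_def pv_def)
  show "HV i i = 0" if "even i" for i using that by (simp add: HV_def)
  show "2/3 * pv d + 1/3 * pv (d+2) \<le> pv d - 0" if "d \<le> -2" for d using pv_i[OF that] by simp
  show "2/3 * pv d + 1/3 * pv (d-2) \<le> pv d - 0" if "d \<ge> 2" for d using pv_ii[OF that] by simp
  show "5/9 * pv d + 2/9 * pv (d+2) + 2/9 * pv (d-2) \<le> pv d - 0" if "\<bar>d\<bar> \<ge> 2" for d using pv_iii[OF that] by simp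
  show "1/2 * pv d + 1/4 * pv (d-2) + 1/4 * pv (d+2) \<le> pv d - 0" if "\<bar>d\<bar> \<ge> 2" for d using pv_iv[OF that] by simp
  show "1/4 * pv (-2) + 1/4 * pv 2 \<le> pv 0 - 0" using pv_v by simp
qed simp

lemma KP:
  assumes "inv2 s" "fst s \<noteq> snd s" "real_of_int \<bar>D2 s\<bar> < c" "c \<ge> 0"
  shows "LK (fst s) (\<lambda>i. LK (snd s) (\<lambda>j. HP c i j)) \<le> pd c (D2 s) - 1"
proof (rule Kgen[OF assms(1,2,3)])
  show "HP c i j \<le> pd c (i - j)" for i j using assms(4) by (auto simp: HP_def pd_def)
  show "HP c i i = 0" if "even i" for i using that by (simp add: HP_def)
  show "2/3 * pd c d + 1/3 * pd c (d+2) \<le> pd c d - 1" if "d \<le> -2" "real_of_int \<bar>d\<bar> < c" for d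
    by (rule pd_i[OF that])
  show "2/3 * pd c d + 1/3 * pd c (d-2) \<le> pd c d - 1" if "d \<ge> 2" "real_of_int \<bar>d\<bar> < c" for d
    by (rule pd_ii[OF that])
  show "5/9 * pd c d + 2/9 * pd c (d+2) + 2/9 * pd c (d-2) \<le> pd c d - 1" if "\<bar>d\<bar> \<ge> 2" "real_of_int \<bar>d\<bar> < c" for d
    by (rule pd_iii[OF that(1)])
  show "1/2 * pd c d + 1/4 * pd c (d-2) + 1/4 * pd c (d+2) \<le> pd c d - 1" if "\<bar>d\<bar> \<ge> 2" "real_of_int \<bar>d\<bar> < c" for d
    by (rule pd_iv[OF that(1)])
  show "1/4 * pd c (-2) + 1/4 * pd c 2 \<le> pd c 0 - 1" by (rule pd_v[OF assms(4)])
qed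

lemma Rk_const: "Rk p F (\<lambda>_. A) m N s = Rk p F (\<lambda>_. A) 0 N s"
proof (induction N arbitrary: m s)
  case 0 then show ?case by simp
next
  case (Suc N)
  have "Rk p F (\<lambda>_. A) (Suc m) N t = Rk p F (\<lambda>_. A) (Suc 0) N t" for t
    using Suc.IH[of "Suc m" t] Suc.IH[of "Suc 0" t] by simp
  then show ?case by simp
qed

lemma Rk_tail: "(\<And>j. j > m \<Longrightarrow> S j = A) \<Longrightarrow> Rk p F S m N s = Rk p F (\<lambda>_. A) 0 N s"
proof (induction N arbitrary: m s)
  case 0 then show ?case by simp
next
  case (Suc N)
  have "Rk p F S (Suc m) N t = Rk p F (\<lambda>_. A) 0 N t" for t by (rule Suc.IH) (use Suc.prems in auto)
  moreover have "S (Suc m) = A" using Suc.prems by auto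
  ultimately show ?case by (simp add: Rk_const[of p F A "Suc 0"])
qed

lemma Rk_nonneg: "Rk q2 F2 S m N s \<ge> 0"
  by (induction N arbitrary: m s) (auto intro!: sum_nonneg mult_nonneg_nonneg q2_nonneg)

lemma Rk_le1: "Rk q2 F2 S m N s \<le> 1"
proof (induction N arbitrary: m s)
  case 0 then show ?case by simp
next
  case (Suc N)
  have "(\<Sum>t\<in>F2 s \<inter> S (Suc m). q2 s t * Rk q2 F2 S (Suc m) N t) \<le> (\<Sum>t\<in>F2 s \<inter> S (Suc m). q2 s t)"
    by (rule sum_mono, rule mult_left_le) (use Suc.IH q2_nonneg in auto)
  also have "\<dots> \<le> (\<Sum>t\<in>F2 s. q2 s t)"
    by (rule sum_mono2) (auto simp: finite_F2 q2_nonneg)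
  also have "\<dots> \<le> 1" by (rule q2_sum_le1)
  finally show ?case by simp
qed

lemma sum_sub_le:
  assumes "finite Fs" "\<And>t. t \<in> Fs \<inter> T \<Longrightarrow> f t \<le> h t" "\<And>t. t \<in> Fs \<Longrightarrow> 0 \<le> h t" "\<And>t. q t \<ge> (0::real)"
  shows "(\<Sum>t\<in>Fs \<inter> T. q t * f t) \<le> (\<Sum>t\<in>Fs. q t * h t)"
proof -
  have "(\<Sum>t\<in>Fs \<inter> T. q t * f t) \<le> (\<Sum>t\<in>Fs \<inter> T. q t * h t)"
    by (rule sum_mono) (use assms in \<open>auto intro: mult_left_mono\<close>)
  also have "\<dots> \<le> (\<Sum>t\<in>Fs. q t * h t)"
    by (rule sum_mono2) (use assms in auto)
  finally show ?thesis .
qed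

abbreviation Ra :: "nat \<Rightarrow> vtx \<times> vtx \<Rightarrow> real" where "Ra N s \<equiv> Rk q2 F2 (\<lambda>_. alive) 0 N s"
abbreviation Rs :: "real \<Rightarrow> nat \<Rightarrow> vtx \<times> vtx \<Rightarrow> real" where "Rs c N s \<equiv> Rk q2 F2 (\<lambda>_. strip c) 0 N s"

lemma Rk_Suc_const: "Rk p F (\<lambda>_. A) 0 (Suc N) s = (\<Sum>t\<in>F s \<inter> A. p s t * Rk p F (\<lambda>_. A) 0 N t)"
  by (simp add: Rk_const[of p F A "Suc 0"])

lemma HV_alive: "fst t \<noteq> snd t \<Longrightarrow> HV (lv (fst t)) (lv (snd t)) = pv (D2 t)"
  unfolding HV_def D2_def using lv_eq_even by auto

lemma HP_alive: "fst t \<noteq> snd t \<Longrightarrow> HP c (lv (fst t)) (lv (snd t)) = pd c (D2 t)"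
  unfolding HP_def D2_def using lv_eq_even by auto

lemma strip_alive: "strip c \<subseteq> alive" unfolding strip_def alive_def by auto

lemma D1:
  assumes c: "c > 0"
  shows "inv2 s \<Longrightarrow> s \<in> alive \<Longrightarrow> Ra N s \<le> pv (D2 s) / c + (if s \<in> strip c then Rs c N s else 0)"
proof (induction N arbitrary: s)
  case 0
  show ?case
  proof (cases "s \<in> strip c")
    case True then show ?thesis using c by (simp add: pv_def)
  next
    case False
    then have "real_of_int \<bar>D2 s\<bar> \<ge> c" using 0 unfolding strip_def alive_def by auto
    then have "1 \<le> pv (D2 s) / c" using c by (simp add: pv_def field_simps)
    then show ?thesis using False by simp
  qed
next
  case (Suc N)
  show ?case
  proof (cases "s \<in> strip c")
    case False
    then have "real_of_int \<bar>D2 s\<bar> \<ge> c" using Suc.prems unfolding strip_def alive_def by auto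
    then have "1 \<le> pv (D2 s) / c" using c by (simp add: pv_def field_simps)
    then show ?thesis using False Rk_le1[of "\<lambda>_. alive" 0 "Suc N" s] by simp
  next
    case True
    have vs: "fst s \<in> G_verts" "snd s \<in> G_verts" using Suc.prems unfolding inv2_def by auto
    have "Ra (Suc N) s = (\<Sum>t\<in>F2 s \<inter> alive. q2 s t * Ra N t)" by (rule Rk_Suc_const)
    also have "\<dots> \<le> (\<Sum>t\<in>F2 s \<inter> alive. q2 s t * (pv (D2 t) / c + (if t \<in> strip c then Rs c N t else 0)))"
      by (rule sum_mono, rule mult_left_mono) (use Suc.IH F2_props(1)[OF _ Suc.prems(1)] q2_nonneg in auto)
    also have "\<dots> = (1/c) * (\<Sum>t\<in>F2 s \<inter> alive. q2 s t * pv (D2 t)) + (\<Sum>t\<in>F2 s \<inter> alive. q2 s t * (if t \<in> strip c then Rs c N t else 0))"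
      by (simp add: sum.distrib sum_distrib_left algebra_simps)
    also have "(\<Sum>t\<in>F2 s \<inter> alive. q2 s t * (if t \<in> strip c then Rs c N t else 0)) = (\<Sum>t\<in>F2 s \<inter> strip c. q2 s t * Rs c N t)"
    proof -
      have "(\<Sum>t\<in>F2 s \<inter> alive. q2 s t * (if t \<in> strip c then Rs c N t else 0)) = (\<Sum>t\<in>F2 s \<inter> alive. if t \<in> strip c then q2 s t * Rs c N t else 0)"
        by (rule sum.cong) auto
      also have "\<dots> = (\<Sum>t\<in>F2 s \<inter> alive \<inter> strip c. q2 s t * Rs c N t)"
        by (rule sum.inter_restrict[symmetric]) (simp add: finite_F2)
      also have "F2 s \<inter> alive \<inter> strip c = F2 s \<inter> strip c" using strip_alive by blast
      finally show ?thesis .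
    qed
    also have "\<dots> = Rs c (Suc N) s" by (rule Rk_Suc_const[symmetric])
    finally have A: "Ra (Suc N) s \<le> 1/c * (\<Sum>t\<in>F2 s \<inter> alive. q2 s t * pv (D2 t)) + Rs c (Suc N) s" .
    have "(\<Sum>t\<in>F2 s \<inter> alive. q2 s t * pv (D2 t)) \<le> (\<Sum>t\<in>F2 s. q2 s t * HV (lv (fst t)) (lv (snd t)))"
    proof (rule sum_sub_le)
      show "pv (D2 t) \<le> HV (lv (fst t)) (lv (snd t))" if "t \<in> F2 s \<inter> alive" for t
        using HV_alive[of t] that by (simp add: alive_def)
      show "0 \<le> HV (lv (fst t)) (lv (snd t))" for t by (simp add: HV_def pv_def)
    qed (auto simp: finite_F2 q2_nonneg)
    also have "\<dots> = LK (fst s) (\<lambda>i. LK (snd s) (\<lambda>j. HV i j))" by (rule sumF2[OF vs])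
    also have "\<dots> \<le> pv (D2 s)" using KV[OF Suc.prems(1)] Suc.prems(2) unfolding alive_def by simp
    finally have "1/c * (\<Sum>t\<in>F2 s \<inter> alive. q2 s t * pv (D2 t)) \<le> 1/c * pv (D2 s)"
      using c by (intro mult_left_mono) auto
    then have "Ra (Suc N) s \<le> pv (D2 s) / c + Rs c (Suc N) s" using A by simp
    then show ?thesis using True by simp
  qed
qed



definition Amax :: "real \<Rightarrow> real" where "Amax c = (2*c+4)*c + 2*(2*c+4)"

lemma sum_le_bnd:
  assumes "\<And>t. t \<in> F2 s \<inter> T \<Longrightarrow> R t \<le> b" "b \<ge> 0"
  shows "(\<Sum>t\<in>F2 s \<inter> T. q2 s t * R t) \<le> b"
proof -
  have "(\<Sum>t\<in>F2 s \<inter> T. q2 s t * R t) \<le> (\<Sum>t\<in>F2 s. q2 s t * b)"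
    by (rule sum_sub_le) (use assms in \<open>auto simp: finite_F2 q2_nonneg\<close>)
  also have "\<dots> = (\<Sum>t\<in>F2 s. q2 s t) * b" by (simp add: sum_distrib_right)
  also have "\<dots> \<le> 1 * b" by (rule mult_right_mono[OF q2_sum_le1 assms(2)])
  finally show ?thesis by simp
qed

lemma Foster:
  assumes c: "c \<ge> 0"
  shows "inv2 s \<Longrightarrow> s \<in> strip c \<Longrightarrow> (\<Sum>j<N. Rs c j s) \<le> pd c (D2 s)"
proof (induction N arbitrary: s)
  case 0
  have "real_of_int \<bar>D2 s\<bar> \<le> 2*c+4" using 0 c unfolding strip_def by auto
  then show ?case using pd_nonneg c by simp
next
  case (Suc N)
  have vs: "fst s \<in> G_verts" "snd s \<in> G_verts" using Suc.prems unfolding inv2_def by auto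
  have "(\<Sum>j<Suc N. Rs c j s) = Rs c 0 s + (\<Sum>j<N. Rs c (Suc j) s)" by (rule sum.lessThan_Suc_shift)
  also have "\<dots> = 1 + (\<Sum>j<N. \<Sum>t\<in>F2 s \<inter> strip c. q2 s t * Rs c j t)"
    by (simp only: Rk_Suc_const Rk.simps(1))
  also have "(\<Sum>j<N. \<Sum>t\<in>F2 s \<inter> strip c. q2 s t * Rs c j t) = (\<Sum>t\<in>F2 s \<inter> strip c. q2 s t * (\<Sum>j<N. Rs c j t))"
    by (subst sum.swap) (simp add: sum_distrib_left)
  also have "\<dots> \<le> (\<Sum>t\<in>F2 s \<inter> strip c. q2 s t * pd c (D2 t))"
    by (rule sum_mono, rule mult_left_mono) (use Suc.IH F2_props(1)[OF _ Suc.prems(1)] q2_nonneg in auto)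
  also have "\<dots> \<le> (\<Sum>t\<in>F2 s. q2 s t * HP c (lv (fst t)) (lv (snd t)))"
  proof (rule sum_sub_le)
    show "pd c (D2 t) \<le> HP c (lv (fst t)) (lv (snd t))" if "t \<in> F2 s \<inter> strip c" for t
      using HP_alive[of t c] that by (simp add: strip_def)
    show "0 \<le> HP c (lv (fst t)) (lv (snd t))" if "t \<in> F2 s" for t
    proof -
      have "\<bar>D2 t - D2 s\<bar> \<le> 2" using F2_props(2)[OF that Suc.prems(1)] .
      moreover have "real_of_int \<bar>D2 s\<bar> < c" using Suc.prems(2) unfolding strip_def by auto
      ultimately have "real_of_int \<bar>D2 t\<bar> \<le> 2*c+4" using c by linarith
      then have "pd c (D2 t) \<ge> 0" using pd_nonneg c by simp
      then show ?thesis unfolding HP_def D2_def by simp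
    qed
  qed (auto simp: finite_F2 q2_nonneg)
  also have "\<dots> = LK (fst s) (\<lambda>i. LK (snd s) (\<lambda>j. HP c i j))" by (rule sumF2[OF vs])
  also have "\<dots> \<le> pd c (D2 s) - 1"
    by (rule KP[OF Suc.prems(1)]) (use Suc.prems(2) c in \<open>auto simp: strip_def\<close>)
  finally show ?case by simp
qed

lemma Rk_dec: "Rk q2 F2 (\<lambda>_. A) 0 (Suc N) s \<le> Rk q2 F2 (\<lambda>_. A) 0 N s"
proof (induction N arbitrary: s)
  case 0 then show ?case using Rk_le1[of "\<lambda>_. A" 0 1 s] by simp
next
  case (Suc N)
  have a: "Rk q2 F2 (\<lambda>_. A) 0 (Suc (Suc N)) s = (\<Sum>t\<in>F2 s \<inter> A. q2 s t * Rk q2 F2 (\<lambda>_. A) 0 (Suc N) t)"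
    by (rule Rk_Suc_const)
  have b: "Rk q2 F2 (\<lambda>_. A) 0 (Suc N) s = (\<Sum>t\<in>F2 s \<inter> A. q2 s t * Rk q2 F2 (\<lambda>_. A) 0 N t)"
    by (rule Rk_Suc_const)
  show ?case unfolding a b
    by (rule sum_mono, rule mult_left_mono[OF Suc.IH q2_nonneg])
qed

lemma Rk_antimono: "j \<le> N \<Longrightarrow> Rk q2 F2 (\<lambda>_. A) 0 N s \<le> Rk q2 F2 (\<lambda>_. A) 0 j s"
proof (induction N)
  case 0 then show ?case by simp
next
  case (Suc N)
  show ?case
  proof (cases "j = Suc N")
    case False
    then have "j \<le> N" using Suc.prems by simp
    then show ?thesis using Suc.IH Rk_dec[of A N s] by linarith
  qed simp
qed

lemma Rs_bound:
  assumes c: "c \<ge> 0" and "inv2 s" "s \<in> strip c" "N \<ge> 1"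
  shows "Rs c N s \<le> Amax c / real N"
proof -
  have "real N * Rs c N s = (\<Sum>j<N. Rs c N s)" by simp
  also have "\<dots> \<le> (\<Sum>j<N. Rs c j s)" by (rule sum_mono) (auto intro: Rk_antimono)
  also have "\<dots> \<le> pd c (D2 s)" by (rule Foster[OF c assms(2,3)])
  also have "\<dots> \<le> Amax c" unfolding Amax_def by (rule pd_le) (use assms in \<open>auto simp: strip_def\<close>)
  finally show ?thesis using assms(4) by (simp add: field_simps)
qed

definition Sn :: "nat \<Rightarrow> nat \<Rightarrow> (vtx \<times> vtx) set" where
  "Sn n j = (if j \<le> n then UNIV else alive)"

lemma Amax_nonneg: "c \<ge> 0 \<Longrightarrow> Amax c \<ge> 0" unfolding Amax_def by simp

lemma D3:
  assumes c: "c > 0" and N: "N \<ge> 1"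
  shows "k \<le> n \<Longrightarrow> inv2 s \<Longrightarrow> \<bar>D2 s\<bar> \<le> 2 * int (n - k) \<Longrightarrow>
     Rk q2 F2 (Sn n) (n - k) (k + Suc N) s \<le> (2 * real n + 4) / c + Amax c / real N"
proof (induction k arbitrary: s)
  case 0
  have bnn: "(2 * real n + 4) / c + Amax c / real N \<ge> 0" using c Amax_nonneg[of c] by simp
  have "Rk q2 F2 (Sn n) n (Suc N) s = (\<Sum>t\<in>F2 s \<inter> alive. q2 s t * Ra N t)"
  proof -
    have "Rk q2 F2 (Sn n) (Suc n) N t = Ra N t" for t by (rule Rk_tail) (simp add: Sn_def)
    then show ?thesis by (simp add: Sn_def)
  qed
  also have "\<dots> \<le> (2 * real n + 4) / c + Amax c / real N"
  proof (rule sum_le_bnd[OF _ bnn])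
    fix t assume t: "t \<in> F2 s \<inter> alive"
    have it: "inv2 t" using F2_props(1) t 0 by blast
    have "\<bar>D2 t\<bar> \<le> 2 * int n + 2" using F2_props(2)[of t s] t 0 by auto
    then have "pv (D2 t) \<le> 2 * real n + 4" unfolding pv_def by linarith
    then have p: "pv (D2 t) / c \<le> (2 * real n + 4) / c" using c by (simp add: divide_right_mono)
    have r: "(if t \<in> strip c then Rs c N t else 0) \<le> Amax c / real N"
      using Rs_bound[of c t N] it N c Amax_nonneg[of c] by auto
    show "Ra N t \<le> (2 * real n + 4) / c + Amax c / real N"
      using D1[OF c it, of N] t p r unfolding alive_def by auto
  qed
  finally show ?case by simp
next
  case (Suc k)
  have bnn: "(2 * real n + 4) / c + Amax c / real N \<ge> 0" using c Amax_nonneg[of c] by simp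
  have e1: "Suc (n - Suc k) = n - k" using Suc.prems by simp
  have e2: "Suc k + Suc N = Suc (k + Suc N)" by simp
  have "Rk q2 F2 (Sn n) (n - Suc k) (Suc k + Suc N) s = (\<Sum>t\<in>F2 s \<inter> Sn n (n - k). q2 s t * Rk q2 F2 (Sn n) (n - k) (k + Suc N) t)"
    unfolding e2 Rk.simps e1 ..
  also have "\<dots> \<le> (2 * real n + 4) / c + Amax c / real N"
  proof (rule sum_le_bnd[OF _ bnn])
    fix t assume t: "t \<in> F2 s \<inter> Sn n (n - k)"
    have it: "inv2 t" using F2_props(1) t Suc.prems by blast
    have "\<bar>D2 t\<bar> \<le> 2 * int (n - k)" using F2_props(2)[of t s] t Suc.prems by auto
    then show "Rk q2 F2 (Sn n) (n - k) (k + Suc N) t \<le> (2 * real n + 4) / c + Amax c / real N"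
      using Suc.IH[OF _ it] Suc.prems by simp
  qed
  finally show ?case .
qed



context pairw begin

definition En :: "nat \<Rightarrow> 's set" where
  "En n = {\<omega> \<in> space M. \<forall>m. n < m \<longrightarrow> X m \<omega> \<noteq> Y m \<omega>}"

lemma En_sets: "En n \<in> sets M"
  unfolding En_def
proof (rule sets.sets_Collect_countable_All)
  fix m
  show "{\<omega> \<in> space M. n < m \<longrightarrow> X m \<omega> \<noteq> Y m \<omega>} \<in> sets M"
  proof -
    have "{\<omega> \<in> space M. (\<lambda>p. n < m \<longrightarrow> fst p \<noteq> snd p) (Wp m \<omega>)} \<in> sets M" by (rule Zset[OF Wpm])
    then show ?thesis by (simp only: Wp_def fst_conv snd_conv)
  qed
qed

lemma E_bound:
  assumes c: "c > 0" and N: "N \<ge> 1"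
  shows "measure M (En n) \<le> (2 * real n + 4) / c + Amax c / real N"
proof -
  interpret prob_space M by (rule X.ps)
  define St where "St = stay M Wp (Sn n) 0 (n + Suc N)"
  define C0 where "C0 = cyl M Wp 0 (\<lambda>_. (v, v))"
  have Sts: "St \<in> sets M" unfolding St_def by (rule stay_sets[OF Wpm])
  have C0s: "C0 \<in> sets M" unfolding C0_def by (rule cyl_sets[OF Wpm])
  have "En n \<subseteq> St" unfolding En_def St_def stay_def Sn_def Wp_def alive_def by auto
  then have "measure M (En n) \<le> measure M St" by (rule finite_measure_mono[OF _ Sts])
  also have "\<dots> \<le> measure M ((C0 \<inter> St) \<union> (space M - C0))"
    by (rule finite_measure_mono) (use Sts C0s sets.sets_into_space in auto)
  also have "\<dots> \<le> measure M (C0 \<inter> St) + measure M (space M - C0)"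
    by (rule measure_Un_le) (use Sts C0s in auto)
  also have "measure M (space M - C0) = 0" using prob_compl[OF C0s] cyl0_2 unfolding C0_def by simp
  also have "measure M (C0 \<inter> St) = Rk q2 F2 (Sn n) 0 (n + Suc N) (v, v)"
    unfolding C0_def St_def stay_eq2 cyl0_2 by simp
  also have "\<dots> \<le> (2 * real n + 4) / c + Amax c / real N"
  proof -
    have iv: "inv2 (v, v)" using X.vv unfolding inv2_def by simp
    have "Rk q2 F2 (Sn n) (n - n) (n + Suc N) (v, v) \<le> (2 * real n + 4) / c + Amax c / real N"
      by (rule D3[OF c N _ iv]) (auto simp: D2_def)
    then show ?thesis by simp
  qed
  finally show ?thesis by simp
qed

lemma E_null: "measure M (En n) = 0"
proof (rule ccontr)
  assume ne: "measure M (En n) \<noteq> 0"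
  define \<mu> where "\<mu> = measure M (En n)"
  have mu: "\<mu> > 0" using ne measure_nonneg[of M "En n"] unfolding \<mu>_def by linarith
  define c where "c = 4 * (2 * real n + 4) / \<mu>"
  have c: "c > 0" unfolding c_def using mu by simp
  define N where "N = nat \<lceil>4 * Amax c / \<mu>\<rceil> + 1"
  have N: "N \<ge> 1" unfolding N_def by simp
  have "real N \<ge> 4 * Amax c / \<mu>" unfolding N_def by linarith
  then have "Amax c / real N \<le> \<mu> / 4"
    using mu N Amax_nonneg[of c] c by (simp add: field_simps)
  moreover have "(2 * real n + 4) / c = \<mu> / 4" unfolding c_def using mu by (simp add: field_simps)
  moreover have "\<mu> \<le> (2 * real n + 4) / c + Amax c / real N" unfolding \<mu>_def by (rule E_bound[OF c N])
  ultimately show False using mu by linarith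
qed

lemma meet_AE: "AE \<omega> in M. infinite {n. X n \<omega> = Y n \<omega>}"
proof -
  interpret prob_space M by (rule X.ps)
  have "AE \<omega> in M. \<omega> \<notin> En n" for n using prob_eq_0[OF En_sets] E_null by simp
  then have "AE \<omega> in M. \<forall>n. \<omega> \<notin> En n" by (simp add: AE_all_countable)
  then show ?thesis
  proof (rule AE_mp, intro AE_I2 impI)
    fix \<omega> assume "\<omega> \<in> space M" "\<forall>n. \<omega> \<notin> En n"
    then have "\<forall>n. \<exists>m>n. X m \<omega> = Y m \<omega>" unfolding En_def by auto
    then show "infinite {n. X n \<omega> = Y n \<omega>}" by (simp add: infinite_nat_iff_unbounded)
  qed
qed

end

theorem mainTheorem11:
  shows "(\<forall>(M :: 's measure) X v. v \<in> G_verts \<longrightarrow> srw M G_edge X v \<longrightarrow>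
            measure M {\<omega> \<in> space M. \<exists>n>0. X n \<omega> = v} < 1)
       \<and> (\<forall>(M :: 's measure) X Y v. v \<in> G_verts \<longrightarrow> srw M G_edge X v \<longrightarrow> srw M G_edge Y v \<longrightarrow>
            indep_processes M X Y \<longrightarrow>
            (AE \<omega> in M. infinite {n. X n \<omega> = Y n \<omega>}))"
proof (intro conjI allI impI)
  fix M :: "'s measure" and X v
  assume "v \<in> G_verts" "srw M G_edge X v"
  then interpret walk M X v by unfold_locales
  show "measure M {\<omega> \<in> space M. \<exists>n>0. X n \<omega> = v} < 1" by (rule transient)
next
  fix M :: "'s measure" and X Y v
  assume "v \<in> G_verts" "srw M G_edge X v" "srw M G_edge Y v" "indep_processes M X Y"
  then interpret pairw M X Y v by unfold_locales
  show "AE \<omega> in M. infinite {n. X n \<omega> = Y n \<omega>}" by (rule meet_AE)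
qed


end
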